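(* Let $f:\mathbb{R}^n\to\mathbb{R}$ be a continuously differentiable convex function. Let $D_1,\dots,D_p$ and $H_1,\dots,H_p$ be diagonal matrices, each $H_i$ with nonnegative diagonal entries, such that for each $i$, $f(y)\le f(x)+\nabla f(x)^T(y-x)+\tfrac12\|y-x\|_{H_i}^2$ for all $x,y\in\mathbb{R}^n$, and $D_i\succ H_i$. Let $(x_{k,m})_{k\ge1,\,0\le m\le p}$ be generated by the CIWHT method with $\mathcal{D}=(D_1,\dots,D_p)$. Then every limit point $\bar x$ of the sequence of iterates $(x_{k,m})_{k\ge 1,\,1\le m\le p}$ (ordered lexicographically in $(k,m)$) is $D_i$-stationary for every $i=1,\dots,p$.
   Context: $\|z\|_A^2=z^TAz$. $C_s=\{x\in\mathbb{R}^n:\|x\|_0\le s\}$ for a positive integer $s$, where $\|x\|_0$ is the number of nonzero entries. $\mathcal{P}_{C_s}(z)=\operatorname{argmin}_{y\in C_s}\|y-z\|_2^2$ (set-valued). CIWHT (Cyclic Iterative Weighted Hard Thresholding): given an initial point $x_{1,0}\in C_s$; for $k=1,2,\dots$, for $m=1,\dots,p$, pick $y_{k,m}\in\mathcal{P}_{C_s}\big(D_m^{1/2}x_{k,m-1}-D_m^{-1/2}\nabla f(x_{k,m-1})\big)$ and set $x_{k,m}=D_m^{-1/2}y_{k,m}$; then set $x_{k+1,0}=x_{k,p}$. For a diagonal $D\succ0$, a point $x\in C_s$ is $D$-stationary if $x\in D^{-1/2}\mathcal{P}_{C_s}\big(D^{1/2}x-D^{-1/2}\nabla f(x)\big)$.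 *)

theory Defs
  imports "HOL-Analysis.Analysis"
begin

text \<open>Diagonal matrices on R^n are represented by their diagonal, a vector d.\<close>

definition sparse_set :: "nat \<Rightarrow> (real^'n) set" where
  "sparse_set s = {x. card {j. x $ j \<noteq> 0} \<le> s}"

definition proj_sparse :: "nat \<Rightarrow> real^'n \<Rightarrow> (real^'n) set" where
  "proj_sparse s z = {y \<in> sparse_set s. \<forall>y' \<in> sparse_set s. (norm (y - z))\<^sup>2 \<le> (norm (y' - z))\<^sup>2}"

definition dsqrt :: "real^'n \<Rightarrow> real^'n \<Rightarrow> real^'n" where
  "dsqrt d x = (\<chi> j. sqrt (d $ j) * x $ j)"

definition dinvsqrt :: "real^'n \<Rightarrow> real^'n \<Rightarrow> real^'n" where
  "dinvsqrt d x = (\<chi> j. x $ j / sqrt (d $ j))"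

definition wnorm2 :: "real^'n \<Rightarrow> real^'n \<Rightarrow> real" where
  "wnorm2 h z = (\<Sum>j\<in>UNIV. h $ j * (z $ j)\<^sup>2)"

definition D_stationary :: "nat \<Rightarrow> (real^'n \<Rightarrow> real^'n) \<Rightarrow> real^'n \<Rightarrow> real^'n \<Rightarrow> bool" where
  "D_stationary s grad d x \<longleftrightarrow> x \<in> sparse_set s \<and>
     x \<in> dinvsqrt d ` proj_sparse s (dsqrt d x - dinvsqrt d (grad x))"

definition CIWHT_seq :: "nat \<Rightarrow> nat \<Rightarrow> (nat \<Rightarrow> real^'n) \<Rightarrow> (real^'n \<Rightarrow> real^'n)
    \<Rightarrow> (nat \<Rightarrow> nat \<Rightarrow> real^'n) \<Rightarrow> bool" where
  "CIWHT_seq s p D grad x \<longleftrightarrow>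
     x 1 0 \<in> sparse_set s \<and>
     (\<forall>k\<ge>1. \<forall>m\<in>{1..p}. \<exists>y \<in> proj_sparse s
          (dsqrt (D m) (x k (m - 1)) - dinvsqrt (D m) (grad (x k (m - 1)))).
          x k m = dinvsqrt (D m) y) \<and>
     (\<forall>k\<ge>1. x (k + 1) 0 = x k p)"

definition lex_seq :: "nat \<Rightarrow> (nat \<Rightarrow> nat \<Rightarrow> 'a) \<Rightarrow> nat \<Rightarrow> 'a" where
  "lex_seq p x t = x (t div p + 1) (t mod p + 1)"

definition limit_point :: "(nat \<Rightarrow> 'a::metric_space) \<Rightarrow> 'a \<Rightarrow> bool" where
  "limit_point z a \<longleftrightarrow> (\<exists>r. strict_mono r \<and> (z \<circ> r) \<longlonglongrightarrow> a)"

end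

theory Submission
  imports Defs
begin

lemma norm2_sum: "(norm (v::real^'n))\<^sup>2 = (\<Sum>j\<in>UNIV. (v $ j)\<^sup>2)"
  unfolding power2_norm_eq_inner inner_vec_def by (simp add: power2_eq_square)

lemma dsqrt_tendsto: "(a \<longlongrightarrow> b) F \<Longrightarrow> ((\<lambda>j. dsqrt d (a j)) \<longlongrightarrow> dsqrt d b) F"
  unfolding dsqrt_def by (intro tendsto_intros)

lemma dinvsqrt_tendsto: "(a \<longlongrightarrow> b) F \<Longrightarrow> ((\<lambda>j. dinvsqrt d (a j)) \<longlongrightarrow> dinvsqrt d b) F"
  unfolding dinvsqrt_def divide_inverse by (intro tendsto_intros)

lemma support_dsqrt: "\<forall>j. d $ j > 0 \<Longrightarrow> {j. dsqrt d x $ j \<noteq> 0} = {j. x $ j \<noteq> 0}"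
  by (auto simp: dsqrt_def) (metis order_less_irrefl)

lemma support_dinvsqrt: "\<forall>j. d $ j > 0 \<Longrightarrow> {j. dinvsqrt d x $ j \<noteq> 0} = {j. x $ j \<noteq> 0}"
  by (auto simp: dinvsqrt_def) (metis order_less_irrefl)

lemma dsqrt_dinvsqrt: "\<forall>j. d $ j > 0 \<Longrightarrow> dsqrt d (dinvsqrt d x) = x"
  by (simp add: dsqrt_def dinvsqrt_def vec_eq_iff) (metis order_less_irrefl)

lemma dinvsqrt_dsqrt: "\<forall>j. d $ j > 0 \<Longrightarrow> dinvsqrt d (dsqrt d x) = x"
  by (simp add: dsqrt_def dinvsqrt_def vec_eq_iff) (metis order_less_irrefl)

lemma sparse_limit:
  assumes "\<And>j. a j \<in> sparse_set s" "a \<longlonglongrightarrow> b"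
  shows "b \<in> sparse_set s"
proof -
  let ?S = "{k. b $ k \<noteq> 0}"
  have "\<forall>k\<in>?S. eventually (\<lambda>j. a j $ k \<noteq> 0) sequentially"
  proof
    fix k assume "k \<in> ?S"
    have "(\<lambda>j. a j $ k) \<longlonglongrightarrow> b $ k" using assms(2) by (rule tendsto_vec_nth)
    then show "eventually (\<lambda>j. a j $ k \<noteq> 0) sequentially"
      using \<open>k \<in> ?S\<close> by (simp add: tendsto_imp_eventually_ne)
  qed
  then have "eventually (\<lambda>j. \<forall>k\<in>?S. a j $ k \<noteq> 0) sequentially"
    by (intro eventually_ball_finite) auto
  then obtain N where "\<forall>j\<ge>N. \<forall>k\<in>?S. a j $ k \<noteq> 0"
    unfolding eventually_sequentially by blast
  then obtain j where "\<forall>k\<in>?S. a j $ k \<noteq> 0" by blast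
  then have "?S \<subseteq> {k. a j $ k \<noteq> 0}" by auto
  then have "card ?S \<le> card {k. a j $ k \<noteq> 0}" by (intro card_mono) auto
  also have "\<dots> \<le> s" using assms(1)[of j] by (simp add: sparse_set_def)
  finally show ?thesis by (simp add: sparse_set_def)
qed

lemma proj_closed:
  assumes "\<And>j. y j \<in> proj_sparse s (z j)" "y \<longlonglongrightarrow> yb" "z \<longlonglongrightarrow> zb"
  shows "yb \<in> proj_sparse s zb"
proof -
  have sp: "\<And>j. y j \<in> sparse_set s" using assms(1) by (simp add: proj_sparse_def)
  have "yb \<in> sparse_set s" by (rule sparse_limit[OF sp assms(2)])
  moreover have "(norm (yb - zb))\<^sup>2 \<le> (norm (y' - zb))\<^sup>2" if "y' \<in> sparse_set s" for y'
  proof (rule LIMSEQ_le)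
    show "(\<lambda>j. (norm (y j - z j))\<^sup>2) \<longlonglongrightarrow> (norm (yb - zb))\<^sup>2"
      using assms(2,3) by (intro tendsto_intros)
    show "(\<lambda>j. (norm (y' - z j))\<^sup>2) \<longlonglongrightarrow> (norm (y' - zb))\<^sup>2"
      using assms(3) by (intro tendsto_intros)
    show "\<exists>N. \<forall>n\<ge>N. (norm (y n - z n))\<^sup>2 \<le> (norm (y' - z n))\<^sup>2"
        using assms(1) that unfolding proj_sparse_def by blast
  qed
  ultimately show ?thesis by (simp add: proj_sparse_def)
qed

lemma aux_lin: "A + 2 * B \<le> (0::real) \<Longrightarrow> G = B \<Longrightarrow> G + A / 2 \<le> 0"
  by linarith

lemma aux_lin2: "S \<le> C \<Longrightarrow> S = A + B + (C::real) \<Longrightarrow> A + B \<le> 0"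
  by linarith

lemma step_ineq:
  assumes dpos: "\<forall>j. d $ j > 0" and w: "w \<in> sparse_set s"
    and y: "y \<in> proj_sparse s (dsqrt d w - dinvsqrt d g)"
    and w': "w' = dinvsqrt d y"
  shows "g \<bullet> (w' - w) + (\<Sum>j\<in>UNIV. d $ j * ((w' - w) $ j)\<^sup>2) / 2 \<le> 0"
proof -
  let ?z = "dsqrt d w - dinvsqrt d g"
  have "dsqrt d w \<in> sparse_set s"
    using w by (simp add: sparse_set_def support_dsqrt[OF dpos])
  then have le: "(norm (y - ?z))\<^sup>2 \<le> (norm (dsqrt d w - ?z))\<^sup>2"
    using y by (auto simp: proj_sparse_def)
  have yeq: "y = dsqrt d w'" using w' dsqrt_dinvsqrt[OF dpos] by simp
  have e1: "(y - ?z) $ j = sqrt (d $ j) * ((w' - w) $ j) + g $ j / sqrt (d $ j)" for j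
    by (simp add: yeq dsqrt_def dinvsqrt_def algebra_simps)
  have e2: "(dsqrt d w - ?z) $ j = g $ j / sqrt (d $ j)" for j
    by (simp add: dsqrt_def dinvsqrt_def)
  have sq: "(sqrt (d $ j) * v + c / sqrt (d $ j))\<^sup>2 = d $ j * v\<^sup>2 + 2 * (c * v) + (c / sqrt (d $ j))\<^sup>2" for j v c
  proof -
    have a: "sqrt (d $ j) \<noteq> 0" and a2: "(sqrt (d $ j))\<^sup>2 = d $ j" using dpos[rule_format, of j] by auto
    have "(sqrt (d $ j) * v + c / sqrt (d $ j))\<^sup>2 = (sqrt (d $ j))\<^sup>2 * v\<^sup>2 + 2 * ((sqrt (d $ j) * v) * (c / sqrt (d $ j))) + (c / sqrt (d $ j))\<^sup>2"
      by (simp add: power2_sum power_mult_distrib)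
    also have "(sqrt (d $ j) * v) * (c / sqrt (d $ j)) = c * v" using a by simp
    finally show ?thesis by (simp only: a2)
  qed
  have "(\<Sum>j\<in>UNIV. d $ j * ((w' - w) $ j)\<^sup>2 + 2 * (g $ j * (w' - w) $ j) + (g $ j / sqrt (d $ j))\<^sup>2)
      \<le> (\<Sum>j\<in>UNIV. (g $ j / sqrt (d $ j))\<^sup>2)"
    using le unfolding norm2_sum e1 e2 sq .
  moreover have "(\<Sum>j\<in>UNIV. d $ j * ((w' - w) $ j)\<^sup>2 + 2 * (g $ j * (w' - w) $ j) + (g $ j / sqrt (d $ j))\<^sup>2)
     = (\<Sum>j\<in>UNIV. d $ j * ((w' - w) $ j)\<^sup>2) + 2 * (\<Sum>j\<in>UNIV. g $ j * (w' - w) $ j) + (\<Sum>j\<in>UNIV. (g $ j / sqrt (d $ j))\<^sup>2)"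
    by (simp only: sum.distrib sum_distrib_left)
  ultimately have "(\<Sum>j\<in>UNIV. d $ j * ((w' - w) $ j)\<^sup>2) + 2 * (\<Sum>j\<in>UNIV. g $ j * (w' - w) $ j) \<le> 0"
    by (rule aux_lin2)
  moreover have "g \<bullet> (w' - w) = (\<Sum>j\<in>UNIV. g $ j * (w' - w) $ j)"
    unfolding inner_vec_def by simp
  ultimately show ?thesis by (rule aux_lin)
qed

theorem theorem4p5:
  fixes f :: "real^'n \<Rightarrow> real" and grad :: "real^'n \<Rightarrow> real^'n"
    and s p :: nat and D H :: "nat \<Rightarrow> real^'n"
    and x :: "nat \<Rightarrow> nat \<Rightarrow> real^'n" and xbar :: "real^'n"
  assumes s_pos: "s \<ge> 1" and p_pos: "p \<ge> 1"
    and grad: "\<And>u. (f has_derivative (\<lambda>h. grad u \<bullet> h)) (at u)"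
    and grad_cont: "continuous_on UNIV grad"
    and cvx: "convex_on UNIV f"
    and H_nonneg: "\<And>i j. i \<in> {1..p} \<Longrightarrow> H i $ j \<ge> 0"
    and descent: "\<And>i u v. i \<in> {1..p} \<Longrightarrow>
        f v \<le> f u + grad u \<bullet> (v - u) + wnorm2 (H i) (v - u) / 2"
    and D_gt_H: "\<And>i j. i \<in> {1..p} \<Longrightarrow> D i $ j > H i $ j"
    and iter: "CIWHT_seq s p D grad x"
    and lim: "limit_point (lex_seq p x) xbar"
  shows "\<forall>i\<in>{1..p}. D_stationary s grad (D i) xbar"
proof -
  have Dpos: "\<forall>j. D i $ j > 0" if "i \<in> {1..p}" for i
    using H_nonneg[OF that] D_gt_H[OF that] by (meson le_less_trans)
  define w where "w t = (if t = 0 then x 1 0 else lex_seq p x (t - 1))" for t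
  define m where "m t = t mod p + 1" for t
  have m_in: "m t \<in> {1..p}" for t
  proof -
    have "t mod p < p" using p_pos by simp
    then show ?thesis by (simp add: m_def)
  qed
  have iterD: "x 1 0 \<in> sparse_set s"
    "\<And>k mm. k \<ge> 1 \<Longrightarrow> mm \<in> {1..p} \<Longrightarrow> \<exists>y\<in>proj_sparse s (dsqrt (D mm) (x k (mm - 1)) - dinvsqrt (D mm) (grad (x k (mm - 1)))). x k mm = dinvsqrt (D mm) y"
    "\<And>k. k \<ge> 1 \<Longrightarrow> x (k + 1) 0 = x k p"
    using iter unfolding CIWHT_seq_def by blast+
  have wS: "w (Suc t) = x (t div p + 1) (m t)" for t
    by (simp add: w_def lex_seq_def m_def)
  have wt: "w t = x (t div p + 1) (m t - 1)" for t
  proof (cases t)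
    case 0 then show ?thesis by (simp add: w_def m_def)
  next
    case (Suc u)
    then have wu: "w t = x (u div p + 1) (u mod p + 1)" by (simp add: w_def lex_seq_def)
    show ?thesis
    proof (cases "Suc (u mod p) = p")
      case True
      then have "t mod p = 0" "t div p = u div p + 1"
        using Suc by (simp_all add: mod_Suc div_Suc)
      then show ?thesis using wu True iterD(3)[of "u div p + 1"] by (simp add: m_def)
    next
      case False
      then have "t mod p = Suc (u mod p)" "t div p = u div p"
        using Suc by (simp_all add: mod_Suc div_Suc)
      then show ?thesis using wu by (simp add: m_def)
    qed
  qed
  have step: "\<exists>y\<in>proj_sparse s (dsqrt (D (m t)) (w t) - dinvsqrt (D (m t)) (grad (w t))). w (Suc t) = dinvsqrt (D (m t)) y" for t
    using iterD(2)[of "t div p + 1" "m t"] m_in unfolding wS wt[of t] by auto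
  have wsp: "w t \<in> sparse_set s" for t
  proof (induction t)
    case 0 then show ?case using iterD(1) by (simp add: w_def)
  next
    case (Suc t)
    from step[of t] obtain y where y: "y \<in> proj_sparse s (dsqrt (D (m t)) (w t) - dinvsqrt (D (m t)) (grad (w t)))"
      "w (Suc t) = dinvsqrt (D (m t)) y" by blast
    then have "y \<in> sparse_set s" by (simp add: proj_sparse_def)
    then show ?case using y(2) support_dinvsqrt[OF Dpos[OF m_in]] by (simp add: sparse_set_def)
  qed
  obtain c where c: "c > 0" "\<And>i j. i \<in> {1..p} \<Longrightarrow> c \<le> D i $ j - H i $ j"
  proof -
    let ?C = "(\<lambda>(i,j). D i $ j - H i $ j) ` ({1..p} \<times> UNIV)"
    have fin: "finite ?C" by simp
    have ne: "?C \<noteq> {}" using p_pos by auto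
    have "Min ?C > 0" using fin ne D_gt_H by (auto simp: Min_gr_iff)
    moreover have "Min ?C \<le> D i $ j - H i $ j" if "i \<in> {1..p}" for i j
      using fin that by (intro Min_le) auto
    ultimately show ?thesis using that by blast
  qed
  have fcont: "continuous_on UNIV f"
    using grad has_derivative_continuous by (blast intro: continuous_at_imp_continuous_on)
  have desc: "f (w (Suc t)) \<le> f (w t) - c / 2 * (norm (w (Suc t) - w t))\<^sup>2" for t
  proof -
    let ?i = "m t" and ?v = "w (Suc t) - w t"
    from step[of t] obtain y where y: "y \<in> proj_sparse s (dsqrt (D (m t)) (w t) - dinvsqrt (D (m t)) (grad (w t)))"
      "w (Suc t) = dinvsqrt (D (m t)) y" by blast
    have A: "grad (w t) \<bullet> ?v + (\<Sum>j\<in>UNIV. D ?i $ j * (?v $ j)\<^sup>2) / 2 \<le> 0"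
      by (rule step_ineq[OF Dpos[OF m_in] wsp y(1) y(2)])
    have B: "f (w (Suc t)) \<le> f (w t) + grad (w t) \<bullet> ?v + wnorm2 (H ?i) ?v / 2"
      by (rule descent[OF m_in])
    have C0: "c * (?v $ j)\<^sup>2 \<le> D ?i $ j * (?v $ j)\<^sup>2 - H ?i $ j * (?v $ j)\<^sup>2" for j
    proof -
      have "c * (?v $ j)\<^sup>2 \<le> (D ?i $ j - H ?i $ j) * (?v $ j)\<^sup>2"
        by (rule mult_right_mono) (use c(2)[OF m_in] in auto)
      then show ?thesis by (simp add: left_diff_distrib)
    qed
    have C: "c * (norm ?v)\<^sup>2 \<le> (\<Sum>j\<in>UNIV. D ?i $ j * (?v $ j)\<^sup>2) - wnorm2 (H ?i) ?v"
      unfolding norm2_sum wnorm2_def sum_distrib_left sum_subtractf[symmetric]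
      by (rule sum_mono) (rule C0)
    show ?thesis using A B C by linarith
  qed
  from lim obtain r where r: "strict_mono r" "(lex_seq p x \<circ> r) \<longlonglongrightarrow> xbar"
    by (auto simp: limit_point_def)
  define sq where "sq j = Suc (r j)" for j
  have sq_mono: "strict_mono sq" using r(1) by (simp add: strict_mono_def sq_def)
  have wsq: "(\<lambda>j. w (sq j)) \<longlonglongrightarrow> xbar" using r(2) by (simp add: sq_def w_def comp_def)
  have "decseq (\<lambda>t. f (w t))"
  proof (rule decseq_SucI)
    fix t
    have "0 \<le> c / 2 * (norm (w (Suc t) - w t))\<^sup>2" using c(1) by simp
    then show "f (w (Suc t)) \<le> f (w t)" using desc[of t] by linarith
  qed
  then have fdec: "f (w u) \<le> f (w t)" if "t \<le> u" for t u
    using that by (simp add: decseq_def)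
  have flim: "(\<lambda>j. f (w (sq j))) \<longlonglongrightarrow> f xbar"
    by (rule continuous_on_tendsto_compose[OF fcont wsq]) auto
  have fbelow: "f xbar \<le> f (w t)" for t
  proof (rule LIMSEQ_le_const2[OF flim])
    show "\<exists>N. \<forall>n\<ge>N. f (w (sq n)) \<le> f (w t)"
    proof (intro exI allI impI)
      fix n assume "t \<le> n"
      moreover have "n \<le> sq n" using seq_suble[OF sq_mono] by simp
      ultimately show "f (w (sq n)) \<le> f (w t)" by (intro fdec) simp
    qed
  qed
  define a where "a t = (norm (w (Suc t) - w t))\<^sup>2" for t
  have psum: "(\<Sum>t<N. c / 2 * a t) \<le> f (w 0) - f (w N)" for N
  proof (induction N)
    case 0 then show ?case by simp
  next
    case (Suc N)
    have "(\<Sum>t<Suc N. c / 2 * a t) = (\<Sum>t<N. c / 2 * a t) + c / 2 * a N" by simp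
    also have "\<dots> \<le> f (w 0) - f (w (Suc N))" using Suc.IH desc[of N] unfolding a_def by linarith
    finally show ?case .
  qed
  have summ: "summable (\<lambda>t. c / 2 * a t)"
  proof (rule bounded_imp_summable[where B = "f (w 0) - f xbar"])
    show "0 \<le> c / 2 * a n" for n using c(1) by (simp add: a_def)
    show "(\<Sum>k\<le>n. c / 2 * a k) \<le> f (w 0) - f xbar" for n
      using psum[of "Suc n"] fbelow[of "Suc n"] unfolding lessThan_Suc_atMost by linarith
  qed
  have "(\<lambda>t. c / 2 * a t) \<longlonglongrightarrow> 0" by (rule summable_LIMSEQ_zero[OF summ])
  then have "(\<lambda>t. (2 / c) * (c / 2 * a t)) \<longlonglongrightarrow> (2 / c) * 0" by (intro tendsto_intros)
  then have "a \<longlonglongrightarrow> 0" using c(1) by simp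
  then have "(\<lambda>t. sqrt (a t)) \<longlonglongrightarrow> sqrt 0" by (intro tendsto_intros)
  then have dlim: "(\<lambda>t. norm (w (Suc t) - w t)) \<longlonglongrightarrow> 0" by (simp add: a_def)
  have off: "(\<lambda>t. norm (w (t + l) - w t)) \<longlonglongrightarrow> 0" for l
  proof (induction l)
    case 0 then show ?case by simp
  next
    case (Suc l)
    have "(\<lambda>t. norm (w (Suc (t + l)) - w (t + l))) \<longlonglongrightarrow> 0"
      using LIMSEQ_ignore_initial_segment[OF dlim, of l] by simp
    then have g: "(\<lambda>t. norm (w (Suc (t + l)) - w (t + l)) + norm (w (t + l) - w t)) \<longlonglongrightarrow> 0 + 0"
      using Suc.IH by (rule tendsto_add)
    show ?case
    proof (rule Lim_null_comparison)
      show "\<forall>\<^sub>F t in sequentially. norm (norm (w (t + Suc l) - w t)) \<le> norm (w (Suc (t + l)) - w (t + l)) + norm (w (t + l) - w t)"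
      proof (rule always_eventually, rule allI)
        fix t
        have "w (t + Suc l) - w t = (w (Suc (t + l)) - w (t + l)) + (w (t + l) - w t)" by simp
        then show "norm (norm (w (t + Suc l) - w t)) \<le> norm (w (Suc (t + l)) - w (t + l)) + norm (w (t + l) - w t)"
          using norm_triangle_ineq[of "w (Suc (t + l)) - w (t + l)" "w (t + l) - w t"] by simp
      qed
      show "(\<lambda>t. norm (w (Suc (t + l)) - w (t + l)) + norm (w (t + l) - w t)) \<longlonglongrightarrow> 0"
        using g by simp
    qed
  qed
  define e where "e t = (\<Sum>l\<le>2*p. norm (w (t + l) - w t))" for t
  have elim: "e \<longlonglongrightarrow> 0"
    unfolding e_def by (rule tendsto_null_sum) (rule off)
  have ele: "norm (w (t + l) - w t) \<le> e t" if "l \<le> 2*p" for t l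
    unfolding e_def by (rule member_le_sum) (use that in auto)
  have esq: "(\<lambda>j. e (sq j)) \<longlonglongrightarrow> 0"
    using LIMSEQ_subseq_LIMSEQ[OF elim sq_mono] by (simp add: comp_def)
  have near: "(\<lambda>j. w (g j)) \<longlonglongrightarrow> xbar" if g: "\<And>j. sq j \<le> g j \<and> g j \<le> sq j + 2*p" for g
  proof -
    have "(\<lambda>j. w (g j) - w (sq j)) \<longlonglongrightarrow> 0"
    proof (rule Lim_null_comparison[OF always_eventually esq], rule allI)
      fix j
      have "g j = sq j + (g j - sq j)" using g[of j] by linarith
      moreover have "g j - sq j \<le> 2*p" using g[of j] by linarith
      ultimately show "norm (w (g j) - w (sq j)) \<le> e (sq j)"
        using ele[of "g j - sq j" "sq j"] by simp
    qed
    then have "(\<lambda>j. (w (g j) - w (sq j)) + w (sq j)) \<longlonglongrightarrow> 0 + xbar"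
      using wsq by (rule tendsto_add)
    then show ?thesis by simp
  qed
  have xsp: "xbar \<in> sparse_set s"
    by (rule sparse_limit[of "\<lambda>j. w (sq j)", OF wsp wsq])
  show ?thesis
  proof
    fix i assume i: "i \<in> {1..p}"
    define tt where "tt j = p * (sq j div p + 1) + (i - 1)" for j
    have bnd: "sq j \<le> tt j \<and> tt j \<le> sq j + 2*p" "sq j \<le> Suc (tt j) \<and> Suc (tt j) \<le> sq j + 2*p" for j
    proof -
      have e1: "p * (sq j div p) + sq j mod p = sq j" by (rule mult_div_mod_eq)
      have e2: "sq j mod p < p" using p_pos by simp
      have "tt j = p * (sq j div p) + p + (i - 1)" by (simp add: tt_def algebra_simps)
      then show "sq j \<le> tt j \<and> tt j \<le> sq j + 2*p" "sq j \<le> Suc (tt j) \<and> Suc (tt j) \<le> sq j + 2*p"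
        using e1 e2 i unfolding atLeastAtMost_iff by (intro conjI; arith)+
    qed
    have mtt: "m (tt j) = i" for j
    proof -
      have "tt j = (i - 1) + (sq j div p + 1) * p" by (simp add: tt_def)
      then have "tt j mod p = (i - 1) mod p" by (simp only: mod_mult_self1)
      also have "\<dots> = i - 1" using i by (intro mod_less) auto
      finally show ?thesis using i by (simp add: m_def)
    qed
    have l1: "(\<lambda>j. w (tt j)) \<longlonglongrightarrow> xbar" by (rule near) (rule bnd(1))
    have l2: "(\<lambda>j. w (Suc (tt j))) \<longlonglongrightarrow> xbar" by (rule near) (rule bnd(2))
    have gl: "(\<lambda>j. grad (w (tt j))) \<longlonglongrightarrow> grad xbar"
      by (rule continuous_on_tendsto_compose[OF grad_cont l1]) auto
    have Yin: "dsqrt (D i) (w (Suc (tt j))) \<in> proj_sparse s (dsqrt (D i) (w (tt j)) - dinvsqrt (D i) (grad (w (tt j))))" for j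
    proof -
      from step[of "tt j"] obtain y where y: "y \<in> proj_sparse s (dsqrt (D i) (w (tt j)) - dinvsqrt (D i) (grad (w (tt j))))"
        "w (Suc (tt j)) = dinvsqrt (D i) y" unfolding mtt by blast
      then show ?thesis using dsqrt_dinvsqrt[OF Dpos[OF i]] by simp
    qed
    have P: "dsqrt (D i) xbar \<in> proj_sparse s (dsqrt (D i) xbar - dinvsqrt (D i) (grad xbar))"
      by (rule proj_closed[OF Yin dsqrt_tendsto[OF l2] tendsto_diff[OF dsqrt_tendsto[OF l1] dinvsqrt_tendsto[OF gl]]])
    have "xbar = dinvsqrt (D i) (dsqrt (D i) xbar)" using dinvsqrt_dsqrt[OF Dpos[OF i]] by simp
    then have "xbar \<in> dinvsqrt (D i) ` proj_sparse s (dsqrt (D i) xbar - dinvsqrt (D i) (grad xbar))"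
      using P by blast
    then show "D_stationary s grad (D i) xbar" using xsp by (simp add: D_stationary_def)
  qed
qed

end
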